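(* Let $K$ be a positive integer and $\ell$ an integer with $0\le\ell\le 2K$ and $K\equiv \ell \pmod 2$. Then \[ C_{K,\ell}^{2K}(q)=\frac{q^{s(K,\ell,2K)}}{J_{1}^3}\, f_{K+1,K+1,1}\big(q^{1+\frac{1}{2}(K+\ell)},q^{1-\frac{1}{2}(K-\ell)},q\big). \]
   Context: Let $q=e^{2\pi i\tau}$ with $\operatorname{Im}\tau>0$, and for real $\alpha$ put $q^{\alpha}:=e^{2\pi i\alpha\tau}$. For $x\in\mathbb{C}^*$, $j(x;q):=\sum_{n\in\mathbb{Z}}(-1)^nq^{n(n-1)/2}x^n$, and $J_1:=\prod_{i\ge1}(1-q^i)$. For positive integers $a,b,c$ and $x,y\in\mathbb{C}^*$, the Hecke-type double-sum is $f_{a,b,c}(x,y,q):=\Big(\sum_{r,s\ge0}-\sum_{r,s<0}\Big)(-1)^{r+s}x^ry^sq^{a\binom{r}{2}+brs+c\binom{s}{2}}$. For a positive integer $N$ and integers $m,\ell$ with $0\le\ell\le N$, $m\equiv\ell\pmod 2$, put $s(m,\ell,N):=-\frac18+\frac{(\ell+1)^2}{4(N+2)}-\frac{m^2}{4N}$. The level-$N$ $A_1^{(1)}$ string function is given by $C_{m,\ell}^{N}(q)=\dfrac{q^{s(m,\ell,N)}}{J_1^3}\, f_{1,1+N,1}\big(q^{1+\frac12(m+\ell)},q^{1-\frac12(m-\ell)},q\big)$. *)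

theory Defs
  imports "HOL-Analysis.Analysis"
begin

definition qpow :: "complex \<Rightarrow> real \<Rightarrow> complex" where
  "qpow \<tau> \<alpha> = exp (2 * of_real pi * \<i> * of_real \<alpha> * \<tau>)"

definition J1 :: "complex \<Rightarrow> complex" where
  "J1 \<tau> = (\<Prod>i. 1 - qpow \<tau> 1 ^ (Suc i))"

definition hecke_f :: "int \<Rightarrow> int \<Rightarrow> int \<Rightarrow> complex \<Rightarrow> complex \<Rightarrow> complex \<Rightarrow> complex" where
  "hecke_f a b c x y \<tau> =
     (let t = (\<lambda>(r::int, s::int). (-1) powi (r + s) * x powi r * y powi s *
                qpow \<tau> (of_int (a * (r * (r - 1) div 2) + b * r * s + c * (s * (s - 1) div 2))))
      in infsum t {(r, s). r \<ge> 0 \<and> s \<ge> 0} - infsum t {(r, s). r < 0 \<and> s < 0})"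

definition s_exp :: "int \<Rightarrow> int \<Rightarrow> int \<Rightarrow> real" where
  "s_exp m l N = - 1/8 + (of_int l + 1)^2 / (4 * of_int (N + 2)) - (of_int m)^2 / (4 * of_int N)"

definition string_fn :: "int \<Rightarrow> int \<Rightarrow> int \<Rightarrow> complex \<Rightarrow> complex" where
  "string_fn m l N \<tau> = qpow \<tau> (s_exp m l N) / (J1 \<tau>) ^ 3 *
     hecke_f 1 (1 + N) 1 (qpow \<tau> (1 + of_int (m + l) / 2)) (qpow \<tau> (1 - of_int (m - l) / 2)) \<tau>"

end

theory Submission
  imports Defs
begin

definition tm :: "int \<Rightarrow> int \<Rightarrow> int \<Rightarrow> real \<Rightarrow> real \<Rightarrow> complex \<Rightarrow> int \<times> int \<Rightarrow> complex" where
  "tm a b c \<alpha> \<beta> \<tau> = (\<lambda>(r, s). (-1) powi (r + s) * qpow \<tau> (\<alpha> * of_int r + \<beta> * of_int s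
      + of_int (a * (r * (r - 1) div 2) + b * r * s + c * (s * (s - 1) div 2))))"

lemma qpow_add: "qpow \<tau> (a + b) = qpow \<tau> a * qpow \<tau> b"
  unfolding qpow_def by (simp add: exp_add[symmetric] algebra_simps)

lemma qpow_powi: "qpow \<tau> a powi r = qpow \<tau> (a * of_int r)"
  unfolding qpow_def by (simp add: exp_power_int algebra_simps)

lemma hdiv: "real_of_int (r * (r - 1) div 2) = of_int r * (of_int r - 1) / 2"
proof -
  have "even (r * (r - 1))" by simp
  then have "r * (r - 1) = 2 * (r * (r - 1) div 2)" by simp
  then have "real_of_int (r * (r - 1)) = 2 * real_of_int (r * (r - 1) div 2)"
    by (metis of_int_mult of_int_numeral)
  then show ?thesis by simp
qed

lemma hecke_tm:
  "hecke_f a b c (qpow \<tau> \<alpha>) (qpow \<tau> \<beta>) \<tau> =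
     infsum (tm a b c \<alpha> \<beta> \<tau>) {(r, s). r \<ge> 0 \<and> s \<ge> 0} - infsum (tm a b c \<alpha> \<beta> \<tau>) {(r, s). r < 0 \<and> s < 0}"
proof -
  have "(\<lambda>(r::int, s::int). (-1) powi (r + s) * qpow \<tau> \<alpha> powi r * qpow \<tau> \<beta> powi s *
                qpow \<tau> (of_int (a * (r * (r - 1) div 2) + b * r * s + c * (s * (s - 1) div 2))))
        = tm a b c \<alpha> \<beta> \<tau>"
    by (auto simp: tm_def qpow_powi qpow_add fun_eq_iff mult.assoc)
  then show ?thesis unfolding hecke_f_def Let_def by simp
qed

lemma exp_eq1:
  assumes "\<alpha> - \<beta> = of_int K"
  shows "tm 1 (1 + 2 * K) 1 \<alpha> \<beta> \<tau> (r, s) = tm (K + 1) (K + 1) 1 \<alpha> \<beta> \<tau> (2 * r, s - r)"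
proof -
  have a: "\<alpha> = \<beta> + of_int K" using assms by simp
  have e: "\<alpha> * of_int r + \<beta> * of_int s
      + of_int (1 * (r * (r - 1) div 2) + (1 + 2 * K) * r * s + 1 * (s * (s - 1) div 2)) =
      \<alpha> * of_int (2 * r) + \<beta> * of_int (s - r)
      + of_int ((K + 1) * ((2 * r) * (2 * r - 1) div 2) + (K + 1) * (2 * r) * (s - r) + 1 * ((s - r) * (s - r - 1) div 2))"
    unfolding a of_int_add of_int_mult hdiv by (simp add: field_simps) (simp add: algebra_simps)?
  have h: "2 * r + (s - r) = r + s" by simp
  show ?thesis unfolding tm_def prod.case e h ..
qed

lemma exp_eq2:
  assumes "\<alpha> - \<beta> = of_int K"
  shows "tm 1 (1 + 2 * K) 1 \<alpha> \<beta> \<tau> (r, s) = tm (K + 1) (K + 1) 1 \<alpha> \<beta> \<tau> (2 * s + 1, r - s - 1)"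
proof -
  have a: "\<alpha> = \<beta> + of_int K" using assms by simp
  have e: "\<alpha> * of_int r + \<beta> * of_int s
      + of_int (1 * (r * (r - 1) div 2) + (1 + 2 * K) * r * s + 1 * (s * (s - 1) div 2)) =
      \<alpha> * of_int (2 * s + 1) + \<beta> * of_int (r - s - 1)
      + of_int ((K + 1) * ((2 * s + 1) * (2 * s + 1 - 1) div 2) + (K + 1) * (2 * s + 1) * (r - s - 1) + 1 * ((r - s - 1) * (r - s - 1 - 1) div 2))"
    unfolding a of_int_add of_int_mult of_int_diff hdiv by (simp add: field_simps) (simp add: algebra_simps)?
  have h: "2 * s + 1 + (r - s - 1) = r + s" by simp
  show ?thesis unfolding tm_def prod.case e h ..
qed

definition kP :: "int \<times> int \<Rightarrow> int \<times> int" where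
  "kP = (\<lambda>(r, s). if r \<le> s then (2 * r, s - r) else (2 * s + 1, r - s - 1))"
definition kN :: "int \<times> int \<Rightarrow> int \<times> int" where
  "kN = (\<lambda>(r, s). if s < r then (2 * r, s - r) else (2 * s + 1, r - s - 1))"
definition iK :: "int \<times> int \<Rightarrow> int \<times> int" where
  "iK = (\<lambda>(a, b). if even a then (a div 2, b + a div 2) else (b + (a - 1) div 2 + 1, (a - 1) div 2))"

lemma bijP: "bij_betw kP {(r, s). r \<ge> 0 \<and> s \<ge> 0} {(r, s). r \<ge> 0 \<and> s \<ge> 0}"
proof (rule bij_betw_byWitness[where f'=iK])
  show "\<forall>a\<in>{(r, s). r \<ge> 0 \<and> s \<ge> (0::int)}. iK (kP a) = a"
    by (auto simp: kP_def iK_def)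
  show "\<forall>a\<in>{(r, s). r \<ge> 0 \<and> s \<ge> (0::int)}. kP (iK a) = a"
    by (auto simp: kP_def iK_def elim!: oddE)
  show "kP ` {(r, s). r \<ge> 0 \<and> s \<ge> 0} \<subseteq> {(r, s). r \<ge> 0 \<and> s \<ge> 0}"
    by (auto simp: kP_def split: if_splits)
  show "iK ` {(r, s). r \<ge> 0 \<and> s \<ge> 0} \<subseteq> {(r, s). r \<ge> 0 \<and> s \<ge> 0}"
    by (auto simp: iK_def split: if_splits; presburger)
qed

lemma bijN: "bij_betw kN {(r, s). r < 0 \<and> s < 0} {(r, s). r < 0 \<and> s < 0}"
proof (rule bij_betw_byWitness[where f'=iK])
  show "\<forall>a\<in>{(r, s). r < 0 \<and> s < (0::int)}. iK (kN a) = a"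
    by (auto simp: kN_def iK_def)
  show "\<forall>a\<in>{(r, s). r < 0 \<and> s < (0::int)}. kN (iK a) = a"
    by (auto simp: kN_def iK_def elim!: oddE)
  show "kN ` {(r, s). r < 0 \<and> s < 0} \<subseteq> {(r, s). r < 0 \<and> s < 0}"
    by (auto simp: kN_def split: if_splits)
  show "iK ` {(r, s). r < 0 \<and> s < 0} \<subseteq> {(r, s). r < 0 \<and> s < 0}"
    by (auto simp: iK_def split: if_splits; presburger)
qed

lemma main:
  assumes "\<alpha> - \<beta> = of_int K"
  shows "hecke_f 1 (1 + 2 * K) 1 (qpow \<tau> \<alpha>) (qpow \<tau> \<beta>) \<tau> =
         hecke_f (K + 1) (K + 1) 1 (qpow \<tau> \<alpha>) (qpow \<tau> \<beta>) \<tau>"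
proof -
  let ?T = "tm (K + 1) (K + 1) 1 \<alpha> \<beta> \<tau>"
  let ?t = "tm 1 (1 + 2 * K) 1 \<alpha> \<beta> \<tau>"
  have p: "?t x = ?T (kP x)" for x
    using exp_eq1[OF assms] exp_eq2[OF assms] by (cases x) (simp add: kP_def)
  have n: "?t x = ?T (kN x)" for x
    using exp_eq1[OF assms] exp_eq2[OF assms] by (cases x) (simp add: kN_def)
  have "infsum ?t {(r, s). r \<ge> 0 \<and> s \<ge> 0} = infsum ?T {(r, s). r \<ge> 0 \<and> s \<ge> 0}"
    unfolding p by (rule infsum_reindex_bij_betw[OF bijP])
  moreover have "infsum ?t {(r, s). r < 0 \<and> s < 0} = infsum ?T {(r, s). r < 0 \<and> s < 0}"
    unfolding n by (rule infsum_reindex_bij_betw[OF bijN])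
  ultimately show ?thesis by (simp add: hecke_tm)
qed

theorem corollary1p3:
  fixes K l :: int and \<tau> :: complex
  assumes "Im \<tau> > 0" and "K > 0" and "0 \<le> l" and "l \<le> 2 * K" and "K mod 2 = l mod 2"
  shows "string_fn K l (2 * K) \<tau> =
    qpow \<tau> (s_exp K l (2 * K)) / (J1 \<tau>) ^ 3 *
    hecke_f (K + 1) (K + 1) 1 (qpow \<tau> (1 + of_int (K + l) / 2)) (qpow \<tau> (1 - of_int (K - l) / 2)) \<tau>"
proof -
  have d: "(1 + real_of_int (K + l) / 2) - (1 - real_of_int (K - l) / 2) = of_int K"
    by (simp add: field_simps)
  show ?thesis unfolding string_fn_def using main[OF d, of \<tau>] by simp
qed

end
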